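(* Let $N\ge2$. Then there exist a unital complex algebra $A$ and $F\in\mathcal G_N^{dif}(A)$ such that if $G,H\in\mathcal G_N^{dif}(A)$ satisfy $(G\circ F)^j(z)=z_j$ and $(F\circ H)^j(z)=z_j$ for all $j$, then $G\neq H$; that is, the left and right substitutional inverses of a power series are in general distinct.
   Context: Let $A$ be a unital complex algebra and $z_1,\dots,z_N$ non-commuting variables commuting with elements of $A$; for a word $w=w(1)\cdots w(p)$ over $\{1,\dots,N\}$ put $z_w=z_{w(1)}\cdots z_{w(p)}$. $\mathcal G_N^{dif}(A)$ is the set of $N$-tuples $F=(F^1,\dots,F^N)$ of formal power series $F^j(z)=z_j+\sum_{|u|\ge2}f_u^jz_u$, $f_u^j\in A$; put $f_k^j=\delta_{jk}$. Substitution: $(F\circ G)^i(z)=\sum_w f_w^i\,G^{w(1)}(z)\cdots G^{w(q)}(z)$, the sum over nonempty words $w$ with $q=|w|$. *)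

theory Defs
  imports Complex_Main "HOL-Algebra.Ring"
begin

definition complex_algebra :: "('a, 'b) ring_scheme \<Rightarrow> (complex \<Rightarrow> 'a \<Rightarrow> 'a) \<Rightarrow> bool" where
  "complex_algebra A sm \<longleftrightarrow> ring A \<and>
     (\<forall>c. \<forall>x\<in>carrier A. sm c x \<in> carrier A) \<and>
     (\<forall>c. \<forall>x\<in>carrier A. \<forall>y\<in>carrier A. sm c (x \<oplus>\<^bsub>A\<^esub> y) = sm c x \<oplus>\<^bsub>A\<^esub> sm c y) \<and>
     (\<forall>c d. \<forall>x\<in>carrier A. sm (c + d) x = sm c x \<oplus>\<^bsub>A\<^esub> sm d x) \<and>
     (\<forall>c d. \<forall>x\<in>carrier A. sm (c * d) x = sm c (sm d x)) \<and>
     (\<forall>x\<in>carrier A. sm 1 x = x) \<and>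
     (\<forall>c. \<forall>x\<in>carrier A. \<forall>y\<in>carrier A.
        sm c (x \<otimes>\<^bsub>A\<^esub> y) = sm c x \<otimes>\<^bsub>A\<^esub> y \<and> sm c (x \<otimes>\<^bsub>A\<^esub> y) = x \<otimes>\<^bsub>A\<^esub> sm c y)"

definition words :: "nat \<Rightarrow> nat list set" where
  "words N = {w. set w \<subseteq> {1..N}}"

text \<open>An N-tuple of noncommutative power series with coefficients in A is
  represented by F :: nat => nat list => 'a, where F j u is the coefficient f_u^j
  of z_u in F^j. Membership in G_N^dif(A): coefficients in A, no constant term,
  linear part z_j (f_k^j = delta_jk); values outside the index range are fixed
  to zero so that equality of tuples is equality of functions.\<close>
definition Gdif :: "('a, 'b) ring_scheme \<Rightarrow> nat \<Rightarrow> (nat \<Rightarrow> nat list \<Rightarrow> 'a) set" where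
  "Gdif A N = {F.
     (\<forall>j u. F j u \<in> carrier A) \<and>
     (\<forall>j u. (j \<notin> {1..N} \<or> u \<notin> words N) \<longrightarrow> F j u = \<zero>\<^bsub>A\<^esub>) \<and>
     (\<forall>j\<in>{1..N}. F j [] = \<zero>\<^bsub>A\<^esub>) \<and>
     (\<forall>j\<in>{1..N}. \<forall>k\<in>{1..N}. F j [k] = (if j = k then \<one>\<^bsub>A\<^esub> else \<zero>\<^bsub>A\<^esub>))}"

text \<open>Product of two noncommutative series (z's commute with A):
  coefficient of z_v in P Q is sum over v = v1 v2 of p_{v1} q_{v2}.\<close>
definition ser_mult :: "('a, 'b) ring_scheme \<Rightarrow> (nat list \<Rightarrow> 'a) \<Rightarrow> (nat list \<Rightarrow> 'a) \<Rightarrow> nat list \<Rightarrow> 'a" where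
  "ser_mult A P Q v = (\<Oplus>\<^bsub>A\<^esub> k\<in>{0..length v}. P (take k v) \<otimes>\<^bsub>A\<^esub> Q (drop k v))"

definition ser_one :: "('a, 'b) ring_scheme \<Rightarrow> nat list \<Rightarrow> 'a" where
  "ser_one A v = (if v = [] then \<one>\<^bsub>A\<^esub> else \<zero>\<^bsub>A\<^esub>)"

definition ser_prod :: "('a, 'b) ring_scheme \<Rightarrow> (nat \<Rightarrow> nat list \<Rightarrow> 'a) \<Rightarrow> nat list \<Rightarrow> nat list \<Rightarrow> 'a" where
  "ser_prod A G w = foldr (\<lambda>k S. ser_mult A (G k) S) w (ser_one A)"

text \<open>Coefficientwise, only words with |w| <= |v| contribute to the coefficient of z_v
  (each G^k has no constant term), so the coefficient is a finite sum.\<close>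
definition subst :: "('a, 'b) ring_scheme \<Rightarrow> nat \<Rightarrow> (nat \<Rightarrow> nat list \<Rightarrow> 'a) \<Rightarrow> (nat \<Rightarrow> nat list \<Rightarrow> 'a) \<Rightarrow> nat \<Rightarrow> nat list \<Rightarrow> 'a" where
  "subst A N F G i v = (\<Oplus>\<^bsub>A\<^esub> w\<in>{w \<in> words N. 1 \<le> length w \<and> length w \<le> length v}.
      F i w \<otimes>\<^bsub>A\<^esub> ser_prod A G w v)"

definition is_ident :: "('a, 'b) ring_scheme \<Rightarrow> nat \<Rightarrow> (nat \<Rightarrow> nat list \<Rightarrow> 'a) \<Rightarrow> bool" where
  "is_ident A N K \<longleftrightarrow> (\<forall>j\<in>{1..N}. \<forall>v\<in>words N. K j v = (if v = [j] then \<one>\<^bsub>A\<^esub> else \<zero>\<^bsub>A\<^esub>))"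

end

theory Submission
  imports Defs
begin

definition CC :: "(nat list \<Rightarrow> complex) set" where
  "CC = {f. \<forall>u. u \<noteq> [0] \<and> u \<noteq> [1] \<and> u \<noteq> [2] \<longrightarrow> f u = 0}"

definition mm :: "(nat list \<Rightarrow> complex) \<Rightarrow> (nat list \<Rightarrow> complex) \<Rightarrow> nat list \<Rightarrow> complex" where
  "mm f g = (\<lambda>u. if u = [0] then f [0] * g [0] else if u = [1] then f [0] * g [1] + f [1] * g [2]
     else if u = [2] then f [2] * g [2] else 0)"

definition II :: "nat list \<Rightarrow> complex" where
  "II = (\<lambda>u. if u = [0] \<or> u = [2] then 1 else 0)"

definition AA :: "(nat list \<Rightarrow> complex) ring" where
  "AA = \<lparr>carrier = CC, mult = mm, one = II, zero = (\<lambda>_. 0), add = (\<lambda>f g u. f u + g u)\<rparr>"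

definition smA :: "complex \<Rightarrow> (nat list \<Rightarrow> complex) \<Rightarrow> nat list \<Rightarrow> complex" where
  "smA c f = (\<lambda>u. c * f u)"

lemma CC_iff: "f \<in> CC \<longleftrightarrow> (\<forall>u. u \<noteq> [0] \<and> u \<noteq> [1] \<and> u \<noteq> [2] \<longrightarrow> f u = 0)"
  by (simp add: CC_def)

lemma mm_CC[simp]: "mm f g \<in> CC" by (simp add: CC_def mm_def)

lemma ring_AA: "ring AA"
proof (rule ringI)
  show "abelian_group AA"
  proof (rule abelian_groupI)
    fix x assume "x \<in> carrier AA"
    then show "\<exists>y\<in>carrier AA. y \<oplus>\<^bsub>AA\<^esub> x = \<zero>\<^bsub>AA\<^esub>"
      by (intro bexI[of _ "\<lambda>u. - x u"]) (auto simp: AA_def CC_def)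
  qed (auto simp: AA_def CC_def algebra_simps)
  show "monoid AA"
  proof (rule monoidI)
    fix x y z assume "x \<in> carrier AA" "y \<in> carrier AA" "z \<in> carrier AA"
    then show "x \<otimes>\<^bsub>AA\<^esub> y \<otimes>\<^bsub>AA\<^esub> z = x \<otimes>\<^bsub>AA\<^esub> (y \<otimes>\<^bsub>AA\<^esub> z)"
      by (auto simp: AA_def mm_def fun_eq_iff algebra_simps)
  next
    fix x assume "x \<in> carrier AA"
    then show "\<one>\<^bsub>AA\<^esub> \<otimes>\<^bsub>AA\<^esub> x = x" "x \<otimes>\<^bsub>AA\<^esub> \<one>\<^bsub>AA\<^esub> = x"
      by (auto simp: AA_def mm_def fun_eq_iff II_def CC_def)
  qed (auto simp: AA_def II_def CC_def mm_def)
qed (auto simp: AA_def mm_def fun_eq_iff algebra_simps)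

lemma calg: "complex_algebra AA smA"
  unfolding complex_algebra_def
  apply (intro conjI)
  apply (rule ring_AA)
  by (auto simp: ring_AA AA_def smA_def CC_def mm_def fun_eq_iff algebra_simps)

lemma finsum_AA: "finite S \<Longrightarrow> (\<And>x. x \<in> S \<Longrightarrow> f x \<in> CC) \<Longrightarrow> finsum AA f S = (\<lambda>u. \<Sum>x\<in>S. f x u)"
proof (induction S rule: finite_induct)
  case empty
  interpret ring AA by (rule ring_AA)
  have "finsum AA f {} = \<zero>\<^bsub>AA\<^esub>" by (rule finsum_empty)
  then show ?case by (simp add: AA_def)
next
  case (insert a S)
  interpret ring AA by (rule ring_AA)
  have "finsum AA f (insert a S) = f a \<oplus>\<^bsub>AA\<^esub> finsum AA f S"
    using insert by (intro finsum_insert) (auto simp: AA_def)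
  then show ?case using insert by (simp add: AA_def)
qed


lemma sum_CC: "(\<lambda>u. \<Sum>x\<in>S. mm (f x) (g x) u) \<in> CC"
  by (simp add: CC_def mm_def)

lemma smult_eq: "ser_mult AA P Q v = (\<lambda>u. \<Sum>k=0..length v. mm (P (take k v)) (Q (drop k v)) u)"
  unfolding ser_mult_def by (subst finsum_AA) (auto simp: AA_def)

lemma sone_eq: "ser_one AA v = (if v = [] then II else (\<lambda>_. 0))"
  by (simp add: ser_one_def AA_def)

lemma sprod_Nil: "ser_prod AA G [] = ser_one AA" by (simp add: ser_prod_def)
lemma sprod_Cons: "ser_prod AA G (k # w) = ser_mult AA (G k) (ser_prod AA G w)"
  by (simp add: ser_prod_def)

lemma mm_0[simp]: "mm f (\<lambda>_. 0) = (\<lambda>_. 0)" "mm (\<lambda>_. 0) f = (\<lambda>_. 0)"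
  by (auto simp: mm_def fun_eq_iff)

lemma mm_II[simp]: "f \<in> CC \<Longrightarrow> mm f II = f" "f \<in> CC \<Longrightarrow> mm II f = f"
  by (auto simp: mm_def fun_eq_iff II_def CC_def)

lemma smult_one: assumes "P v \<in> CC" shows "ser_mult AA P (ser_one AA) v = P v"
proof -
  have "(\<Sum>k=0..length v. mm (P (take k v)) (ser_one AA (drop k v)) u)
      = (\<Sum>k\<in>{length v}. mm (P (take k v)) (ser_one AA (drop k v)) u)" for u
    by (rule sum.mono_neutral_right) (auto simp: sone_eq)
  then show ?thesis using assms by (simp add: smult_eq sone_eq fun_eq_iff)
qed


definition bb :: "nat list \<Rightarrow> complex" where "bb = (\<lambda>u. if u = [0] then 1 else 0)"
definition ee :: "nat list \<Rightarrow> complex" where "ee = (\<lambda>u. if u = [1] then 1 else 0)"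

definition FF :: "nat \<Rightarrow> nat \<Rightarrow> nat list \<Rightarrow> nat list \<Rightarrow> complex" where
  "FF N j u = (if j \<in> {1..N} \<and> u = [j] then II else if j = 1 \<and> u = [1,2] then bb
     else if j = 2 \<and> u = [1,1] then ee else (\<lambda>_. 0))"

lemma CC_simps[simp]: "II \<in> CC" "bb \<in> CC" "ee \<in> CC" "(\<lambda>_. 0) \<in> CC"
  by (auto simp: CC_def II_def bb_def ee_def)

lemma FF_CC[simp]: "FF N j u \<in> CC" by (simp add: FF_def)

lemma FF_Gdif: assumes "2 \<le> N" shows "FF N \<in> Gdif AA N"
  using assms unfolding Gdif_def by (auto simp: FF_def AA_def words_def)

lemma sprod_CC[simp]: "ser_prod AA G w v \<in> CC"
  by (cases w) (simp_all add: sprod_Nil sprod_Cons sone_eq smult_eq sum_CC)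

lemma P0: "ser_prod AA (FF N) w [] = (if w = [] then II else (\<lambda>_. 0))"
  by (cases w) (simp_all add: sprod_Nil sprod_Cons sone_eq smult_eq FF_def)

lemma P1: assumes "2 \<le> N" shows "ser_prod AA (FF N) w [1] = (if w = [1] then II else (\<lambda>_. 0))"
proof (cases w)
  case Nil then show ?thesis by (simp add: sprod_Nil sone_eq)
next
  case (Cons k w')
  then show ?thesis using assms by (simp add: sprod_Cons smult_eq P0 FF_def)
qed

lemma P11: assumes "2 \<le> N" shows "ser_prod AA (FF N) w [1,1] =
   (if w = [1,1] then II else if w = [2] then ee else (\<lambda>_. 0))"
proof (cases w)
  case Nil then show ?thesis by (simp add: sprod_Nil sone_eq)
next
  case (Cons k w')
  then show ?thesis using assms by (simp add: sprod_Cons smult_eq P0 P1[unfolded One_nat_def] FF_def sum.atLeast0_atMost_Suc)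
qed

lemma P211: assumes "2 \<le> N" shows "ser_prod AA (FF N) w [2,1,1] =
   (if w = [2,1,1] then II else if w = [2,2] then ee else (\<lambda>_. 0))"
proof (cases w)
  case Nil then show ?thesis by (simp add: sprod_Nil sone_eq)
next
  case (Cons k w')
  then show ?thesis using assms by (simp add: sprod_Cons smult_eq P0 P11[unfolded One_nat_def] FF_def sum.atLeast0_atMost_Suc)
qed

lemma P1211: assumes "2 \<le> N" shows "ser_prod AA (FF N) w [1,2,1,1] =
   (if w = [1,2,1,1] then II else if w = [1,2,2] then ee else if w = [1,1,1] then bb
    else if w = [1,2] then mm bb ee else (\<lambda>_. 0))"
proof (cases w)
  case Nil then show ?thesis by (simp add: sprod_Nil sone_eq)
next
  case (Cons k w')
  then show ?thesis using assms by (simp add: sprod_Cons smult_eq P0 P11[unfolded One_nat_def] P211[unfolded One_nat_def] FF_def sum.atLeast0_atMost_Suc)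
qed


lemma finite_Sv: "finite {w \<in> words N. 1 \<le> length w \<and> length w \<le> n}"
  by (rule finite_subset[OF _ finite_lists_length_le[of "{1..N}" n]]) (auto simp: words_def)

lemma subst_eq: "subst AA N F G i v = (\<lambda>u. \<Sum>w\<in>{w \<in> words N. 1 \<le> length w \<and> length w \<le> length v}.
     mm (F i w) (ser_prod AA G w v) u)"
  unfolding subst_def by (subst finsum_AA) (auto simp: AA_def finite_Sv finite_Sv[unfolded One_nat_def])

lemma sprod1: "(\<And>x. G k x \<in> CC) \<Longrightarrow> ser_prod AA G [k] v = G k v"
  by (simp add: sprod_Cons sprod_Nil smult_one)

lemma sprod2: "(\<And>x. G c x \<in> CC) \<Longrightarrow> ser_prod AA G [a, c] v = ser_mult AA (G a) (G c) v"
proof -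
  assume h: "\<And>x. G c x \<in> CC"
  have "ser_prod AA G [c] = G c" using sprod1[of G c, OF h] by (simp add: fun_eq_iff)
  then show ?thesis by (simp add: sprod_Cons)
qed

lemma main:
  assumes N: "2 \<le> N" and G: "G \<in> Gdif AA N"
    and R: "is_ident AA N (subst AA N (FF N) G)" and L: "is_ident AA N (subst AA N G (FF N))"
  shows False
proof -
  have Gc: "\<And>j x. G j x \<in> CC" using G by (auto simp: Gdif_def AA_def)
  have G0: "\<And>j. G j [] = (\<lambda>_. 0)" using G
    by (auto simp: Gdif_def AA_def words_def)
  have G11: "G 1 [1] = II" "G 2 [2] = II" "G 1 [2] = (\<lambda>_. 0)" "G 2 [1] = (\<lambda>_. 0)"
    using G N by (auto simp: Gdif_def AA_def)
  have R1: "G 1 v = (\<lambda>u. - mm bb (ser_mult AA (G 1) (G 2) v) u)"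
    if v: "v \<in> words N" "2 \<le> length v" for v
  proof -
    let ?S = "{w \<in> words N. 1 \<le> length w \<and> length w \<le> length v}"
    have "subst AA N (FF N) G 1 v = (\<lambda>_. 0)"
      using R v N unfolding is_ident_def by (auto simp: AA_def)
    then have "(\<Sum>w\<in>?S. mm (FF N 1 w) (ser_prod AA G w v) u) = 0" for u
      by (simp add: subst_eq fun_eq_iff)
    moreover have "(\<Sum>w\<in>?S. mm (FF N 1 w) (ser_prod AA G w v) u)
       = (\<Sum>w\<in>{[1],[1,2]}. mm (FF N 1 w) (ser_prod AA G w v) u)" for u
      by (rule sum.mono_neutral_right[OF finite_Sv]) (use N v in \<open>auto simp: finite_Sv finite_Sv[unfolded One_nat_def] words_def FF_def\<close>)
    ultimately show ?thesis using N Gc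
      by (simp add: fun_eq_iff FF_def sprod1 sprod2 eq_neg_iff_add_eq_0)
  qed
  have R2: "G 2 v = (\<lambda>u. - mm ee (ser_mult AA (G 1) (G 1) v) u)"
    if v: "v \<in> words N" "2 \<le> length v" for v
  proof -
    let ?S = "{w \<in> words N. 1 \<le> length w \<and> length w \<le> length v}"
    have "subst AA N (FF N) G 2 v = (\<lambda>_. 0)"
      using R v N unfolding is_ident_def by (auto simp: AA_def)
    then have "(\<Sum>w\<in>?S. mm (FF N 2 w) (ser_prod AA G w v) u) = 0" for u
      by (simp add: subst_eq fun_eq_iff)
    moreover have "(\<Sum>w\<in>?S. mm (FF N 2 w) (ser_prod AA G w v) u)
       = (\<Sum>w\<in>{[2],[1,1]}. mm (FF N 2 w) (ser_prod AA G w v) u)" for u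
      by (rule sum.mono_neutral_right[OF finite_Sv]) (use N v in \<open>auto simp: finite_Sv finite_Sv[unfolded One_nat_def] words_def FF_def\<close>)
    ultimately show ?thesis using N Gc
      by (simp add: fun_eq_iff FF_def sprod1 sprod2 eq_neg_iff_add_eq_0)
  qed
  have W: "[1,2] \<in> words N" "[2,1] \<in> words N" "[1,1] \<in> words N" "[2,2] \<in> words N"
    "[1,1,1] \<in> words N" "[1,2,2] \<in> words N" "[2,1,1] \<in> words N" "[1,2,1,1] \<in> words N"
    using N by (auto simp: words_def)
  have LL: "2 \<le> length [1,2::nat]" "2 \<le> length [2,1::nat]" "2 \<le> length [1,1::nat]" "2 \<le> length [2,2::nat]"
    "2 \<le> length [1,1,1::nat]" "2 \<le> length [1,2,2::nat]" "2 \<le> length [2,1,1::nat]" "2 \<le> length [1,2,1,1::nat]"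
    by simp_all
  note simps = smult_eq sum.atLeast0_atMost_Suc fun_eq_iff mm_def bb_def ee_def II_def
  have s12: "ser_mult AA (G 1) (G 2) [1,2] = II" using G0 G11 by (simp add: simps)
  have g12: "G 1 [1,2] = (\<lambda>u. - bb u)" by (simp only: R1[OF W(1) LL(1)] s12) (simp add: simps)
  have s21: "ser_mult AA (G 1) (G 2) [2,1] = (\<lambda>_. 0)" using G0 G11 by (simp add: simps)
  have g21: "G 1 [2,1] = (\<lambda>_. 0)" by (simp only: R1[OF W(2) LL(2)] s21) (simp add: simps)
  have t11: "ser_mult AA (G 1) (G 1) [1,1] = II" using G0 G11 by (simp add: simps)
  have g11: "G 2 [1,1] = (\<lambda>u. - ee u)" by (simp only: R2[OF W(3) LL(3)] t11) (simp add: simps)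
  have t22: "ser_mult AA (G 1) (G 1) [2,2] = (\<lambda>_. 0)" using G0 G11 by (simp add: simps)
  have g22: "G 2 [2,2] = (\<lambda>_. 0)" by (simp only: R2[OF W(4) LL(4)] t22) (simp add: simps)
  have s111: "ser_mult AA (G 1) (G 2) [1,1,1] = (\<lambda>u. - ee u)" using G0 G11 g11 by (simp add: simps)
  have g111: "G 1 [1,1,1] = mm bb ee" by (simp only: R1[OF W(5) LL(5)] s111) (simp add: simps)
  have s122: "ser_mult AA (G 1) (G 2) [1,2,2] = (\<lambda>u. - bb u)" using G0 G11 g12 g22 by (simp add: simps)
  have g122: "G 1 [1,2,2] = bb" by (simp only: R1[OF W(6) LL(6)] s122) (simp add: simps)
  have t211: "ser_mult AA (G 1) (G 1) [2,1,1] = (\<lambda>_. 0)" using G0 G11 g21 by (simp add: simps)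
  have g211: "G 2 [2,1,1] = (\<lambda>_. 0)" by (simp only: R2[OF W(7) LL(7)] t211, (simp add: simps)?)
  have s1211: "ser_mult AA (G 1) (G 2) [1,2,1,1] = mm bb ee" using G0 G11 g12 g11 g211 by (simp add: simps)
  have g1211: "G 1 [1,2,1,1] = (\<lambda>u. - mm bb (mm bb ee) u)" by (simp only: R1[OF W(8) LL(8)] s1211)
  let ?v = "[1,2,1,1] :: nat list"
  let ?S = "{w \<in> words N. 1 \<le> length w \<and> length w \<le> length ?v}"
  have "subst AA N G (FF N) 1 ?v = (\<lambda>_. 0)"
    using L W N unfolding is_ident_def by (auto simp: AA_def)
  then have "(\<Sum>w\<in>?S. mm (G 1 w) (ser_prod AA (FF N) w ?v) u) = 0" for u
    by (simp add: subst_eq fun_eq_iff)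
  moreover have "(\<Sum>w\<in>?S. mm (G 1 w) (ser_prod AA (FF N) w ?v) u)
       = (\<Sum>w\<in>{[1,2,1,1],[1,2,2],[1,1,1],[1,2]}. mm (G 1 w) (ser_prod AA (FF N) w ?v) u)" for u
    by (rule sum.mono_neutral_right[OF finite_Sv]) (use N W in \<open>auto simp: P1211[OF N] P1211[OF N, unfolded One_nat_def]\<close>)
  ultimately have Z: "(\<Sum>w\<in>{[1,2,1,1],[1,2,2],[1,1,1],[1,2]}. mm (G 1 w) (ser_prod AA (FF N) w ?v) u) = 0" for u
    by simp
  have e: "ser_prod AA (FF N) [1,2,1,1] ?v = II" "ser_prod AA (FF N) [1,2,2] ?v = ee"
    "ser_prod AA (FF N) [1,1,1] ?v = bb" "ser_prod AA (FF N) [1,2] ?v = mm bb ee"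
    by (simp_all only: P1211[OF N]) simp_all
  have sumv: "(\<Sum>w\<in>{[1,2,1,1],[1,2,2],[1,1,1],[1,2]}. mm (G 1 w) (ser_prod AA (FF N) w ?v) u)
     = mm (G 1 [1,2,1,1]) II u + (mm (G 1 [1,2,2]) ee u + (mm (G 1 [1,1,1]) bb u + mm (G 1 [1,2]) (mm bb ee) u))" for u
    using e by simp
  have B0: "mm (G 1 [1,2,1,1]) II [1] + (mm (G 1 [1,2,2]) ee [1] + (mm (G 1 [1,1,1]) bb [1] + mm (G 1 [1,2]) (mm bb ee) [1])) = 0"
    using Z[of "[1]"] by (simp only: sumv)
  from B0 show False
    by (simp only: g1211 g122 g111 g12) (simp add: mm_def bb_def ee_def II_def)
qed

theorem corollary5:
  fixes N :: nat
  assumes "2 \<le> N"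
  shows "\<exists>(A :: (nat list \<Rightarrow> complex) ring) sm F.
           complex_algebra A sm \<and> F \<in> Gdif A N \<and>
           (\<forall>G\<in>Gdif A N. \<forall>H\<in>Gdif A N.
              is_ident A N (subst A N G F) \<and> is_ident A N (subst A N F H) \<longrightarrow> G \<noteq> H)"
proof (intro exI conjI)
  show "complex_algebra AA smA" by (rule calg)
  show "FF N \<in> Gdif AA N" using assms by (rule FF_Gdif)
  show "\<forall>G\<in>Gdif AA N. \<forall>H\<in>Gdif AA N.
      is_ident AA N (subst AA N G (FF N)) \<and> is_ident AA N (subst AA N (FF N) H) \<longrightarrow> G \<noteq> H"
    using main[OF assms] by blast
qed

end
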